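(* Let $\mathcal{F}$ be a set of predictors, let $\mathcal{Z}$ be a finite nonempty set of groups, and let $\mathcal{L}:\mathcal{F}\to\mathbb{R}$ and $\overline{\mathcal{L}}_z:\mathcal{F}\to\mathbb{R}$ ($z\in\mathcal{Z}$) be given functionals. For $\lambda\in[0,1]$ define $$J_\lambda(f) = (1-\lambda)\,\mathcal{L}(f) + \lambda \max_{z\in\mathcal{Z}} \overline{\mathcal{L}}_z(f).$$ Let $1\ge \overline{\lambda} > \underline{\lambda} > 0$, and let $\overline{f}\in\mathcal{F}$ minimize $J_{\overline{\lambda}}$ over $\mathcal{F}$ and $\underline{f}\in\mathcal{F}$ minimize $J_{\underline{\lambda}}$ over $\mathcal{F}$. Then $$\max_{z\in\mathcal{Z}} \overline{\mathcal{L}}_z(\overline{f}) - \mathcal{L}(\overline{f}) \;\le\; \max_{z\in\mathcal{Z}} \overline{\mathcal{L}}_z(\underline{f}) - \mathcal{L}(\underline{f}).$$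
   Context: This is the min-max fairness objective: $\mathcal{L}(f)$ is the overall (average over all samples) loss of predictor $f$ on a dataset and $\overline{\mathcal{L}}_z(f)$ is the loss of $f$ restricted to group $z$. Minimizing $J_\lambda$ is equivalent to the constrained problem $\min_{f,\epsilon} (1-\lambda)\mathcal{L}(f)+\lambda\epsilon$ subject to $\overline{\mathcal{L}}_z(f)\le\epsilon$ for all $z\in\mathcal{Z}$. The quantity $\max_z \overline{\mathcal{L}}_z(f)-\mathcal{L}(f)$ is the gap between the worst group-wise loss and the overall loss. *)

theory Defs
  imports Main "HOL.Real"
begin

definition worst_loss :: "'z set \<Rightarrow> ('z \<Rightarrow> 'f \<Rightarrow> real) \<Rightarrow> 'f \<Rightarrow> real" where
  "worst_loss Z Lz f = Max ((\<lambda>z. Lz z f) ` Z)"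

definition J :: "real \<Rightarrow> ('f \<Rightarrow> real) \<Rightarrow> 'z set \<Rightarrow> ('z \<Rightarrow> 'f \<Rightarrow> real) \<Rightarrow> 'f \<Rightarrow> real" where
  "J lam L Z Lz f = (1 - lam) * L f + lam * worst_loss Z Lz f"

end

theory Submission
  imports Defs
begin

theorem theorem2:
  fixes F :: "'f set" and Z :: "'z set"
    and L :: "'f \<Rightarrow> real" and Lz :: "'z \<Rightarrow> 'f \<Rightarrow> real"
    and lam_hi lam_lo :: real and f_hi f_lo :: 'f
  assumes "finite Z" and "Z \<noteq> {}"
    and "lam_hi \<le> 1" and "lam_lo < lam_hi" and "0 < lam_lo"
    and "f_hi \<in> F" and "\<And>f. f \<in> F \<Longrightarrow> J lam_hi L Z Lz f_hi \<le> J lam_hi L Z Lz f"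
    and "f_lo \<in> F" and "\<And>f. f \<in> F \<Longrightarrow> J lam_lo L Z Lz f_lo \<le> J lam_lo L Z Lz f"
  shows "worst_loss Z Lz f_hi - L f_hi \<le> worst_loss Z Lz f_lo - L f_lo"
proof -
  have 1: "J lam_hi L Z Lz f_hi \<le> J lam_hi L Z Lz f_lo" using assms by blast
  have 2: "J lam_lo L Z Lz f_lo \<le> J lam_lo L Z Lz f_hi" using assms by blast
  define b where "b = worst_loss Z Lz f_hi - L f_hi"
  define d where "d = worst_loss Z Lz f_lo - L f_lo"
  have "L f_hi + lam_hi * b \<le> L f_lo + lam_hi * d" using 1 unfolding J_def b_def d_def by (simp add: algebra_simps)
  moreover have "L f_lo + lam_lo * d \<le> L f_hi + lam_lo * b" using 2 unfolding J_def b_def d_def by (simp add: algebra_simps)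
  ultimately have "(lam_hi - lam_lo) * b \<le> (lam_hi - lam_lo) * d" by (simp add: algebra_simps)
  then have "b \<le> d" using assms(4) by simp
  then show ?thesis by (simp add: b_def d_def)
qed

end
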